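(* For $d\le3$, $E>0$ and $\epsilon\in(0,1]$ there exists a constant $K_{d,\epsilon,E}$, with $E\mapsto K_{d,\epsilon,E}$ bounded on compact subsets of $(0,\infty)$, such that for $\sigma\in\{0,1\}$, $\eta>0$, $q\in\mathbb R^d$ and either choice of sign, $$\sup_{v_1,v_2\in\mathbb R^d}\prod_{j=1}^d\big\{\langle v_{1,j}\rangle^{-1+\epsilon}\langle v_{2,j}\rangle^{-1+\epsilon}\big\}\,|\nu(q+v_1)-E\pm i\eta|^{-1}\,|\nu(q+\sigma v_1+v_2)-E\pm i\eta|^{-1}\le K_{d,\epsilon,E}(1+\eta^{-2})\prod_{j=1}^d\langle q_j\rangle^{-1+\epsilon}.$$
   Context: $\nu(p)=\frac12|p|^2$ for $p\in\mathbb R^d$; for real $t$, $\langle t\rangle=(1+t^2)^{1/2}$; $v_{i,j}$ and $q_j$ denote coordinates. *)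

theory Defs
  imports "HOL-Analysis.Analysis"
begin

definition nu :: "real ^ 'n \<Rightarrow> real" where
  "nu p = (1/2) * (norm p)^2"

definition jbr :: "real \<Rightarrow> real" where
  "jbr t = sqrt (1 + t^2)"

end

theory Submission
  imports Defs
begin



lemma jbr_ge1: "jbr x \<ge> 1"
  unfolding jbr_def by simp

lemma jbr_pos: "jbr x > 0"
  using jbr_ge1[of x] by simp

lemma jbr_sq: "(jbr x)^2 = 1 + x^2"
  unfolding jbr_def by simp

lemma jbr_minus: "jbr (-x) = jbr x"
  unfolding jbr_def by simp

lemma jbr_add: "jbr (x + y) \<le> 2 * jbr x * jbr y"
proof -
  have "(jbr (x+y))^2 \<le> (2 * jbr x * jbr y)^2"
    unfolding power_mult_distrib jbr_sq
  proof -
    have "(x+y)^2 \<le> 2*x^2 + 2*y^2" using zero_le_power2[of "x-y"] by (simp add: power2_eq_square algebra_simps)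
    moreover have "0 \<le> x^2*y^2" "0 \<le> x^2" "0 \<le> y^2" by simp_all
    moreover have "(2::real)^2 * (1+x^2) * (1+y^2) = 4 + 4*x^2 + 4*y^2 + 4*(x^2*y^2)" by (simp add: algebra_simps)
    ultimately show "1 + (x+y)^2 \<le> 2^2 * (1+x^2) * (1+y^2)" by linarith
  qed
  thus ?thesis using jbr_pos[of x] jbr_pos[of y]
    by (meson power2_le_imp_le jbr_pos less_le mult_nonneg_nonneg zero_le_numeral)
qed

lemma jbr_chain:
  assumes "\<sigma> \<in> {0,1::real}"
  shows "jbr q \<le> 4*jbr v1*jbr v2*jbr(q+v1) \<and> jbr q \<le> 4*jbr v1*jbr v2*jbr(q+\<sigma> * v1+v2)"
proof -
  have g1: "jbr v1 \<ge> 1" "jbr v2 \<ge> 1" by (auto intro: jbr_ge1)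
  have p: "jbr (q+v1) > 0" "jbr (q+v1+v2) > 0" "jbr (q+v2) > 0" by (auto intro: jbr_pos)
  have A: "jbr q \<le> 2*jbr(q+v1)*jbr v1"
    using jbr_add[of "q+v1" "-v1"] by (simp add: jbr_minus)
  have A2: "jbr q \<le> 4*jbr v1*jbr v2*jbr(q+v1)"
  proof -
    have "jbr(q+v1)*jbr v1 * 1 \<le> jbr(q+v1)*jbr v1 * jbr v2"
      by (rule mult_left_mono) (use g1 p in auto)
    moreover have "0 \<le> jbr(q+v1)*jbr v1" using g1 p by simp
    moreover have "4*jbr v1*jbr v2*jbr(q+v1) = 4*(jbr(q+v1)*jbr v1 * jbr v2)" by simp
    moreover have "2*jbr(q+v1)*jbr v1 = 2*(jbr(q+v1)*jbr v1)" by simp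
    ultimately show ?thesis using A by linarith
  qed
  have B: "jbr q \<le> 4*jbr v1*jbr v2*jbr(q+\<sigma> * v1+v2)"
  proof (cases "\<sigma> = 0")
    case True
    have "jbr q \<le> 2*jbr(q+v2)*jbr v2"
      using jbr_add[of "q+v2" "-v2"] by (simp add: jbr_minus)
    moreover have "jbr(q+v2)*jbr v2 * 1 \<le> jbr(q+v2)*jbr v2 * jbr v1"
      by (rule mult_left_mono) (use g1 p in auto)
    moreover have "0 \<le> jbr(q+v2)*jbr v2" using g1 p by simp
    moreover have "4*jbr v1*jbr v2*jbr(q+\<sigma> * v1+v2) = 4*(jbr(q+v2)*jbr v2 * jbr v1)" using True by simp
    moreover have "2*jbr(q+v2)*jbr v2 = 2*(jbr(q+v2)*jbr v2)" by simp
    ultimately show ?thesis by linarith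
  next
    case False
    then have s1: "\<sigma> = 1" using assms by auto
    have "jbr (q+v1) \<le> 2*jbr(q+v1+v2)*jbr v2"
      using jbr_add[of "q+v1+v2" "-v2"] by (simp add: jbr_minus)
    then have "2*jbr(q+v1)*jbr v1 \<le> 2*(2*jbr(q+v1+v2)*jbr v2)*jbr v1"
      using g1 by (intro mult_right_mono) linarith+
    then show ?thesis using A s1 by (simp add: algebra_simps)
  qed
  show ?thesis using A2 B by simp
qed

definition CE :: "real \<Rightarrow> real" where "CE E = 4 + 1/E + 4*E"

lemma res:
  fixes p :: "real ^ 'n"
  assumes "E > 0" "\<eta> > 0" "s \<in> {-1,1::real}"
  shows "inverse (cmod (complex_of_real (nu p - E) + complex_of_real (s * \<eta>) * \<i>)) * (1 + norm p ^ 2)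
     \<le> CE E * (1 + 1/\<eta>)"
proof -
  define t where "t = norm p ^ 2"
  define x where "x = t/2 - E"
  have t0: "t \<ge> 0" unfolding t_def by simp
  have nux: "nu p - E = x" unfolding x_def t_def nu_def by simp
  have ss: "(s*\<eta>)^2 = \<eta>^2" using assms(3) by (auto simp: power2_eq_square)
  have c: "cmod (complex_of_real x + complex_of_real (s * \<eta>) * \<i>) = sqrt (x^2 + \<eta>^2)"
    using complex_norm[of x "s*\<eta>"] Complex_eq[of x "s*\<eta>"] ss by (simp add: mult.commute)
  define c where "c = sqrt (x^2 + \<eta>^2)"
  have ceta: "c \<ge> \<eta>" unfolding c_def using assms(2) by (simp add: real_le_rsqrt)
  have cx: "c \<ge> \<bar>x\<bar>" unfolding c_def by (simp add: real_le_rsqrt)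
  have cpos: "c > 0" using ceta assms(2) by simp
  have C1: "CE E \<ge> 4 + 1/E" "CE E \<ge> 1 + 4*E" unfolding CE_def using assms(1) by auto
  have "(1+t)/c \<le> CE E * (1 + 1/\<eta>)"
  proof (cases "t \<ge> 4*E")
    case True
    have tp: "t > 0" using True assms(1) by simp
    have "x \<ge> t/4" unfolding x_def using True by simp
    hence "c \<ge> t/4" using cx by simp
    hence "(1+t)/c \<le> (1+t)/(t/4)" using tp cpos t0 by (intro divide_left_mono) auto
    also have "\<dots> = 4/t + 4" using tp by (simp add: field_simps)
    also have "\<dots> \<le> 1/E + 4" using True tp assms(1) by (simp add: field_simps)
    also have "\<dots> \<le> CE E" using C1 by simp
    also have "\<dots> \<le> CE E * (1 + 1/\<eta>)" using C1 assms by (simp add: field_simps)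
    finally show ?thesis .
  next
    case False
    have "(1+t)/c \<le> (1+t)/\<eta>" using ceta assms(2) t0 by (intro divide_left_mono) auto
    also have "\<dots> \<le> (1+4*E)/\<eta>" using False assms(2) by (simp add: divide_right_mono)
    also have "\<dots> \<le> CE E/\<eta>" using C1 assms(2) by (simp add: divide_right_mono)
    also have "\<dots> \<le> CE E * (1 + 1/\<eta>)" using C1 assms by (simp add: field_simps)
    finally show ?thesis .
  qed
  thus ?thesis using c unfolding nux c_def t_def by (simp add: field_simps)
qed

lemma powr_le_max:
  fixes r w :: real
  assumes "r > 0" "0 \<le> w" "w \<le> 1"
  shows "r powr w \<le> max 1 r"
proof (cases "r \<le> 1")
  case True
  thus ?thesis using assms powr_le1[of w r] by simp
next
  case False
  hence "r powr w \<le> r powr 1" using assms by (intro powr_mono) auto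
  thus ?thesis using assms by simp
qed


lemma main_bound:
  fixes q v1 v2 :: "real ^ 'n" and \<epsilon> E \<eta> s \<sigma> :: real
  assumes card: "CARD('n) \<le> 3" and e: "0 < \<epsilon>" "\<epsilon> \<le> 1"
    and E: "E > 0" and sig: "\<sigma> \<in> {0,1}" and eta: "\<eta> > 0" and s: "s \<in> {-1,1}"
  shows "(\<Prod>j\<in>UNIV. jbr (v1 $ j) powr (-1 + \<epsilon>) * jbr (v2 $ j) powr (-1 + \<epsilon>))
          * inverse (cmod (complex_of_real (nu (q + v1) - E) + complex_of_real (s * \<eta>) * \<i>))
          * inverse (cmod (complex_of_real (nu (q + \<sigma> *\<^sub>R v1 + v2) - E) + complex_of_real (s * \<eta>) * \<i>))
          \<le> (128 * (CE E)^2) * (1 + \<eta> powr (-2)) * (\<Prod>j\<in>UNIV. jbr (q $ j) powr (-1 + \<epsilon>))"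
proof -
  define w where "w = 1 - \<epsilon>"
  have w: "0 \<le> w" "w \<le> 1" using e unfolding w_def by auto
  define a where "a = q + v1"
  define b where "b = q + \<sigma> *\<^sub>R v1 + v2"
  define ta where "ta = norm a ^ 2"
  define tb where "tb = norm b ^ 2"
  define r where "r j = jbr (q$j) / (jbr (v1$j) * jbr (v2$j))" for j
  define P where "P = (\<Prod>j\<in>UNIV. r j powr w)"
  define Q where "Q = (\<Prod>j\<in>UNIV. jbr (q $ j) powr (-1 + \<epsilon>))"
  define R1 where "R1 = inverse (cmod (complex_of_real (nu a - E) + complex_of_real (s * \<eta>) * \<i>))"
  define R2 where "R2 = inverse (cmod (complex_of_real (nu b - E) + complex_of_real (s * \<eta>) * \<i>))"
  have rpos: "r j > 0" for j unfolding r_def by (simp add: jbr_pos)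
  have ew: "-1 + \<epsilon> = - w" unfolding w_def by simp
  have perj: "jbr (v1 $ j) powr (-1 + \<epsilon>) * jbr (v2 $ j) powr (-1 + \<epsilon>) = r j powr w * jbr (q $ j) powr (-1 + \<epsilon>)" for j
  proof -
    have p1: "jbr (v1$j) > 0" "jbr (v2$j) > 0" "jbr (q$j) > 0" by (auto intro: jbr_pos)
    have "r j powr w = jbr (q$j) powr w / (jbr (v1$j) powr w * jbr (v2$j) powr w)"
      unfolding r_def using p1 by (simp add: powr_divide powr_mult)
    moreover have "jbr (q$j) powr w * jbr (q$j) powr (-w) = 1" using p1 by (simp add: powr_add[symmetric])
    ultimately show ?thesis unfolding ew using p1 by (simp add: powr_minus field_simps)
  qed
  have h1: "(\<Prod>j\<in>UNIV. jbr (v1 $ j) powr (-1 + \<epsilon>) * jbr (v2 $ j) powr (-1 + \<epsilon>)) = P * Q"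
    unfolding P_def Q_def perj by (simp add: prod.distrib)
  have ra: "r j powr w \<le> 4 * jbr (a$j)" and rb: "r j powr w \<le> 4 * jbr (b$j)" for j
  proof -
    have p1: "jbr (v1$j) > 0" "jbr (v2$j) > 0" by (auto intro: jbr_pos)
    have ch: "jbr (q$j) \<le> 4*jbr (v1$j)*jbr (v2$j)*jbr(q$j+v1$j) \<and> jbr (q$j) \<le> 4*jbr (v1$j)*jbr (v2$j)*jbr(q$j+\<sigma> * v1$j+v2$j)"
      using jbr_chain[OF sig] by blast
    have aj: "a$j = q$j+v1$j" "b$j = q$j+\<sigma> * v1$j+v2$j" unfolding a_def b_def by simp_all
    have "r j \<le> 4 * jbr (a$j)" "r j \<le> 4 * jbr (b$j)"
      unfolding r_def aj using ch p1 by (simp_all add: divide_le_eq mult_ac)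
    moreover have "1 \<le> 4 * jbr (a$j)" "1 \<le> 4 * jbr (b$j)" using jbr_ge1[of "a$j"] jbr_ge1[of "b$j"] by linarith+
    moreover have "r j powr w \<le> max 1 (r j)" using powr_le_max[OF rpos w] .
    ultimately show "r j powr w \<le> 4 * jbr (a$j)" "r j powr w \<le> 4 * jbr (b$j)" by auto
  qed
  have P0: "P \<ge> 0" unfolding P_def by (simp add: prod_nonneg)
  have Pa: "P \<le> (\<Prod>j\<in>UNIV. 4 * jbr (a$j))" unfolding P_def by (rule prod_mono) (use ra in auto)
  have Pb: "P \<le> (\<Prod>j\<in>UNIV. 4 * jbr (b$j))" unfolding P_def by (rule prod_mono) (use rb in auto)
  have sqb: "(\<Prod>j\<in>UNIV. 4 * jbr (x$j))^2 \<le> (16 * (1 + norm x ^ 2))^3" for x :: "real ^ 'n"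
  proof -
    have "(\<Prod>j\<in>UNIV. 4 * jbr (x$j))^2 = (\<Prod>j\<in>UNIV. 16 * (1 + (x$j)^2))"
      unfolding prod_power_distrib power_mult_distrib jbr_sq by simp
    also have "\<dots> \<le> (\<Prod>j\<in>(UNIV::'n set). 16 * (1 + norm x ^ 2))"
    proof (rule prod_mono)
      fix j
      have "\<bar>x$j\<bar> \<le> norm x" by (rule component_le_norm_cart)
      hence "(x$j)^2 \<le> norm x ^ 2" by (metis abs_ge_zero power2_abs power_mono)
      thus "0 \<le> 16 * (1 + (x$j)^2) \<and> 16 * (1 + (x$j)^2) \<le> 16 * (1 + norm x ^ 2)" by simp
    qed
    also have "\<dots> = (16 * (1 + norm x ^ 2)) ^ CARD('n)" by simp
    also have "\<dots> \<le> (16 * (1 + norm x ^ 2))^3" by (rule power_increasing) (use card in auto)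
    finally show ?thesis .
  qed
  have ta0: "ta \<ge> 0" "tb \<ge> 0" unfolding ta_def tb_def by simp_all
  have "P^4 \<le> (16 * (1 + ta))^3 * (16 * (1 + tb))^3"
  proof -
    have "P^2 \<le> (\<Prod>j\<in>UNIV. 4 * jbr (a$j))^2" using Pa P0 by (simp add: power_mono)
    also have "\<dots> \<le> (16 * (1 + ta))^3" unfolding ta_def by (rule sqb)
    finally have A: "P^2 \<le> (16 * (1 + ta))^3" .
    have "P^2 \<le> (\<Prod>j\<in>UNIV. 4 * jbr (b$j))^2" using Pb P0 by (simp add: power_mono)
    also have "\<dots> \<le> (16 * (1 + tb))^3" unfolding tb_def by (rule sqb)
    finally have B: "P^2 \<le> (16 * (1 + tb))^3" .
    have "P^4 = P^2 * P^2" by algebra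
    also have "\<dots> \<le> (16 * (1 + ta))^3 * (16 * (1 + tb))^3" using A B P0 ta0 by (intro mult_mono) auto
    finally show ?thesis .
  qed
  also have "\<dots> \<le> (64 * ((1 + ta) * (1 + tb)))^4"
  proof -
    define X where "X = (1+ta)*(1+tb)"
    have X1: "X \<ge> 1" unfolding X_def using ta0 mult_mono[of 1 "1+ta" 1 "1+tb"] by simp
    have "(16 * (1 + ta))^3 * (16 * (1 + tb))^3 = 16^6 * X^3" unfolding X_def by algebra
    also have "\<dots> \<le> 16^6 * X^4" using X1 by (simp add: power_increasing)
    also have "\<dots> = (64 * X)^4" by algebra
    finally show ?thesis unfolding X_def .
  qed
  finally have P4: "P^4 \<le> (64 * ((1 + ta) * (1 + tb)))^4" .
  have PX: "P \<le> 64 * ((1 + ta) * (1 + tb))"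
  proof (rule power_le_imp_le_base[of _ 3])
    show "P ^ Suc 3 \<le> (64 * ((1 + ta) * (1 + tb))) ^ Suc 3" using P4 by (simp add: eval_nat_numeral)
    show "0 \<le> 64 * ((1 + ta) * (1 + tb))" using ta0 by simp
  qed
  have R1: "R1 * (1 + ta) \<le> CE E * (1 + 1/\<eta>)" unfolding R1_def ta_def by (rule res[OF E eta s])
  have R2: "R2 * (1 + tb) \<le> CE E * (1 + 1/\<eta>)" unfolding R2_def tb_def by (rule res[OF E eta s])
  have R0: "R1 \<ge> 0" "R2 \<ge> 0" unfolding R1_def R2_def by simp_all
  have Q0: "Q \<ge> 0" unfolding Q_def by (simp add: prod_nonneg)
  have CE0: "CE E \<ge> 0" unfolding CE_def using E by simp
  have "P * R1 * R2 \<le> 64 * ((1 + ta) * (1 + tb)) * R1 * R2"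
    using PX R0 by (simp add: mult_right_mono)
  also have "\<dots> = 64 * (R1 * (1 + ta)) * (R2 * (1 + tb))" by algebra
  also have "\<dots> \<le> 64 * (CE E * (1 + 1/\<eta>)) * (CE E * (1 + 1/\<eta>))"
  proof (rule mult_mono[OF mult_left_mono[OF R1] R2])
    show "0 \<le> 64 * (CE E * (1 + 1 / \<eta>))" using CE0 eta by simp
    show "0 \<le> R2 * (1 + tb)" using R0 ta0 by simp
  qed simp
  also have "\<dots> = 64 * (CE E)^2 * (1 + 1/\<eta>)^2" by (simp add: power2_eq_square mult_ac)
  also have "\<dots> \<le> 64 * (CE E)^2 * (2 * (1 + \<eta> powr (-2)))"
  proof -
    have "\<eta> powr (-2) = (1/\<eta>)^2" using eta by (simp add: powr_minus powr_realpow divide_inverse power_inverse)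
    moreover have "(1 + 1/\<eta>)^2 \<le> 2 * (1 + (1/\<eta>)^2)" using zero_le_power2[of "1 - 1/\<eta>"]
      by (simp add: power2_eq_square algebra_simps)
    ultimately show ?thesis using mult_left_mono[of "(1 + 1/\<eta>)^2" "2 * (1 + (1/\<eta>)^2)" "64 * (CE E)^2"] by simp
  qed
  also have "\<dots> = 128 * (CE E)^2 * (1 + \<eta> powr (-2))" by simp
  finally have PR: "P * R1 * R2 \<le> 128 * (CE E)^2 * (1 + \<eta> powr (-2))" .
  have "P * Q * R1 * R2 = (P * R1 * R2) * Q" by (simp add: mult_ac)
  also have "\<dots> \<le> 128 * (CE E)^2 * (1 + \<eta> powr (-2)) * Q" using PR Q0 by (rule mult_right_mono)
  finally show ?thesis unfolding h1 Q_def[symmetric] R1_def[symmetric] R2_def[symmetric] a_def[symmetric] b_def[symmetric] .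
qed


theorem lemma23:
  fixes \<epsilon> :: real
  assumes "CARD('n::finite) \<le> 3"
    and "0 < \<epsilon>" and "\<epsilon> \<le> 1"
  shows "\<exists>K :: real \<Rightarrow> real.
     (\<forall>C. compact C \<and> C \<subseteq> {0<..} \<longrightarrow> bounded (K ` C)) \<and>
     (\<forall>E>0. \<forall>(\<sigma>::real)\<in>{0,1}. \<forall>\<eta>>0. \<forall>q :: real ^ 'n. \<forall>s::real\<in>{-1,1}.
        \<forall>v1 v2 :: real ^ 'n.
          (\<Prod>j\<in>UNIV. jbr (v1 $ j) powr (-1 + \<epsilon>) * jbr (v2 $ j) powr (-1 + \<epsilon>))
          * inverse (cmod (complex_of_real (nu (q + v1) - E) + complex_of_real (s * \<eta>) * \<i>))
          * inverse (cmod (complex_of_real (nu (q + \<sigma> *\<^sub>R v1 + v2) - E) + complex_of_real (s * \<eta>) * \<i>))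
          \<le> K E * (1 + \<eta> powr (-2)) * (\<Prod>j\<in>UNIV. jbr (q $ j) powr (-1 + \<epsilon>)))"
proof (intro exI[of _ "\<lambda>E. 128 * (CE E)^2"] conjI allI impI ballI)
  fix C :: "real set"
  assume "compact C \<and> C \<subseteq> {0<..}"
  hence C: "compact C" "C \<subseteq> {0<..}" by auto
  have "continuous_on {0<..} (\<lambda>E::real. 128 * (CE E)^2)"
    unfolding CE_def by (intro continuous_intros) auto
  hence "continuous_on C (\<lambda>E::real. 128 * (CE E)^2)" using C(2) by (rule continuous_on_subset)
  thus "bounded ((\<lambda>E. 128 * (CE E)^2) ` C)"
    using C(1) by (intro compact_imp_bounded compact_continuous_image)
next
  fix E \<sigma> \<eta> s :: real and q v1 v2 :: "real ^ 'n"
  assume "0 < E" "\<sigma> \<in> {0,1}" "0 < \<eta>" "s \<in> {-1,1}"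
  thus "(\<Prod>j\<in>UNIV. jbr (v1 $ j) powr (-1 + \<epsilon>) * jbr (v2 $ j) powr (-1 + \<epsilon>))
          * inverse (cmod (complex_of_real (nu (q + v1) - E) + complex_of_real (s * \<eta>) * \<i>))
          * inverse (cmod (complex_of_real (nu (q + \<sigma> *\<^sub>R v1 + v2) - E) + complex_of_real (s * \<eta>) * \<i>))
          \<le> (128 * (CE E)^2) * (1 + \<eta> powr (-2)) * (\<Prod>j\<in>UNIV. jbr (q $ j) powr (-1 + \<epsilon>))"
    using main_bound[OF assms] by blast
qed

end
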